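(* Let $f$ be a symmetric norm on $\mathbb R^n$, $\mathcal H$ a complex Hilbert space with $\dim\mathcal H\ge n$, and $\|A\|=f(s_1(A),\dots,s_n(A))$ for $A\in\mathcal B(\mathcal H)$. Let $\mathcal S\subseteq\mathbb R^n$ be any compact set of vectors $c=(c_1,\dots,c_n)$ with $c_1\ge\cdots\ge c_n\ge0$ such that $\|A\|=\max\{\sum_{j=1}^n c_js_j(A): c\in\mathcal S\}$ for all $A\in\mathcal B(\mathcal H)$. Then $\|\cdot\|$ is submultiplicative (i.e. $\|AB\|\le\|A\|\|B\|$ for all $A,B\in\mathcal B(\mathcal H)$) if and only if any one of the following holds: (1) $\|A\|\ge s_1(A)$ for all $A\in\mathcal B(\mathcal H)$; (2) there are unit vectors $x,y\in\mathcal H$ such that $\|xy^*\|\ge1$; (3) $f(e_1)\ge1$, equivalently, there is $(c_1,\dots,c_n)\in\mathcal S$ with $c_1\ge1$. Moreover, $\|\cdot\|$ is an algebra norm (submultiplicative with $\|I\|=1$) if and only if it is the operator norm.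
   Context: $\mathcal B(\mathcal H)$ is the algebra of bounded linear operators on $\mathcal H$; $s_k(A)=\inf\{\|A-X\|_{\rm sp}:\operatorname{rank}X<k\}$ is the $k$th singular value, with $\|\cdot\|_{\rm sp}$ the operator norm. A norm $f$ on $\mathbb R^n$ is symmetric if $f(Px)=f(x)$ for all $x$ and every permutation or diagonal orthogonal matrix $P$. $e_1$ is the first standard basis vector of $\mathbb R^n$; $xy^*$ denotes $v\mapsto\langle v,y\rangle x$. (Such a set $\mathcal S$ always exists.) *)

theory Defs
  imports "HOL-Analysis.Analysis"
begin

class chilbert = banach +
  fixes scaleC :: "complex \<Rightarrow> 'a \<Rightarrow> 'a"  (infixr \<open>*\<^sub>C\<close> 75)
    and cinner :: "'a \<Rightarrow> 'a \<Rightarrow> complex"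
  assumes scaleC_of_real: "scaleC (complex_of_real r) x = scaleR r x"
    and scaleC_add_right: "scaleC a (x + y) = scaleC a x + scaleC a y"
    and scaleC_add_left: "scaleC (a + b) x = scaleC a x + scaleC b x"
    and scaleC_scaleC: "scaleC a (scaleC b x) = scaleC (a * b) x"
    and scaleC_one: "scaleC 1 x = x"
    and cinner_add_left: "cinner (x + y) z = cinner x z + cinner y z"
    and cinner_scaleC_left: "cinner (scaleC a x) y = a * cinner x y"
    and cinner_commute: "cinner y x = cnj (cinner x y)"
    and cinner_self_norm: "cinner x x = complex_of_real ((norm x)\<^sup>2)"

definition bounded_clinear :: "('a::chilbert \<Rightarrow> 'a) \<Rightarrow> bool" where
  "bounded_clinear A \<longleftrightarrow> bounded_linear A \<and> (\<forall>c x. A (c *\<^sub>C x) = c *\<^sub>C A x)"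

definition cspan :: "'a::chilbert set \<Rightarrow> 'a set" where
  "cspan V = {\<Sum>v\<in>V. c v *\<^sub>C v | c. True}"

definition cindependent :: "'a::chilbert set \<Rightarrow> bool" where
  "cindependent V \<longleftrightarrow> finite V \<and>
     (\<forall>c. (\<Sum>v\<in>V. c v *\<^sub>C v) = 0 \<longrightarrow> (\<forall>v\<in>V. c v = 0))"

definition dim_ge :: "'a::chilbert itself \<Rightarrow> nat \<Rightarrow> bool" where
  "dim_ge _ n \<longleftrightarrow> (\<exists>V::'a set. cindependent V \<and> card V = n)"

definition rank_lt :: "('a::chilbert \<Rightarrow> 'a) \<Rightarrow> nat \<Rightarrow> bool" where
  "rank_lt X k \<longleftrightarrow> (\<exists>V. finite V \<and> card V < k \<and> range X \<subseteq> cspan V)"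

text \<open>k-th singular value (k >= 1).\<close>
definition sval :: "nat \<Rightarrow> ('a::chilbert \<Rightarrow> 'a) \<Rightarrow> real" where
  "sval k A = Inf {onorm (\<lambda>v. A v - X v) | X. bounded_clinear X \<and> rank_lt X k}"

text \<open>Rank-one operator x y^*: v maps to <v,y> x.\<close>
definition rank_one :: "'a::chilbert \<Rightarrow> 'a \<Rightarrow> ('a \<Rightarrow> 'a)" where
  "rank_one x y = (\<lambda>v. cinner v y *\<^sub>C x)"

text \<open>Vectors of R^n are represented as functions nat => real, of which only
the coordinates 0..n-1 (i.e. the paper's 1..n) are relevant.\<close>
definition symmetric_norm :: "nat \<Rightarrow> ((nat \<Rightarrow> real) \<Rightarrow> real) \<Rightarrow> bool" where
  "symmetric_norm n f \<longleftrightarrow>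
     (\<forall>x y. (\<forall>i<n. x i = y i) \<longrightarrow> f x = f y) \<and>
     (\<forall>x. f x = 0 \<longleftrightarrow> (\<forall>i<n. x i = 0)) \<and>
     (\<forall>a x. f (\<lambda>i. a * x i) = \<bar>a\<bar> * f x) \<and>
     (\<forall>x y. f (\<lambda>i. x i + y i) \<le> f x + f y) \<and>
     (\<forall>p x. p permutes {..<n} \<longrightarrow> f (x \<circ> p) = f x) \<and>
     (\<forall>e x. (\<forall>i<n. e i = 1 \<or> e i = -1) \<longrightarrow> f (\<lambda>i. e i * x i) = f x)"

definition ui_norm :: "nat \<Rightarrow> ((nat \<Rightarrow> real) \<Rightarrow> real) \<Rightarrow> ('a::chilbert \<Rightarrow> 'a) \<Rightarrow> real" where
  "ui_norm n f A = f (\<lambda>j. sval (Suc j) A)"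

definition first_unit :: "nat \<Rightarrow> real" where
  "first_unit = (\<lambda>i. if i = 0 then 1 else 0)"

end

theory Submission
  imports Defs
begin

interpretation cvs: vector_space "scaleC :: complex \<Rightarrow> 'a::chilbert \<Rightarrow> 'a"
  by unfold_locales (auto simp: scaleC_add_right scaleC_add_left scaleC_scaleC scaleC_one)

lemma cmodule: "module (scaleC :: complex \<Rightarrow> 'a::chilbert \<Rightarrow> 'a)"
  using cvs.vector_space_axioms module_iff_vector_space by blast

lemma cspan_eq: "finite V \<Longrightarrow> cspan V = cvs.span V"
  unfolding cspan_def cvs.span_finite by auto

lemma cindependent_eq: "cindependent V \<longleftrightarrow> finite V \<and> cvs.independent V"
  unfolding cindependent_def using cvs.dependent_finite by blast

lemma bclin_hom: "bounded_clinear X \<Longrightarrow> module_hom scaleC scaleC (X::'a::chilbert \<Rightarrow> 'a)"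
  unfolding bounded_clinear_def module_hom_def module_hom_axioms_def
  using cmodule linear_add[of X] bounded_linear.linear by blast

lemma cinner_add_right: "cinner x (y + z) = cinner x y + cinner x z"
  by (metis cinner_commute cinner_add_left complex_cnj_add)

lemma cinner_scaleC_right: "cinner x (c *\<^sub>C y) = cnj c * cinner x y"
  by (metis cinner_commute cinner_scaleC_left complex_cnj_mult complex_cnj_cnj)

lemma cinner_zero_left[simp]: "cinner 0 x = 0"
  using cinner_scaleC_left[of 0 x x] by simp

lemma cinner_zero_right[simp]: "cinner x 0 = 0"
  using cinner_scaleC_right[of x 0 x] by simp

lemma cinner_diff_left: "cinner (x - y) z = cinner x z - cinner y z"
  by (metis cinner_add_left diff_add_cancel eq_diff_eq)

lemma cinner_diff_right: "cinner x (y - z) = cinner x y - cinner x z"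
  by (metis cinner_add_right diff_add_cancel eq_diff_eq)

lemma cinner_self_norm': "cinner x x = complex_of_real (norm x * norm x)"
  by (simp add: cinner_self_norm power2_eq_square)

lemma norm_scaleC: "norm (c *\<^sub>C (x::'a::chilbert)) = cmod c * norm x"
proof -
  have "cinner (c *\<^sub>C x) (c *\<^sub>C x) = (c * cnj c) * cinner x x"
    by (simp add: cinner_scaleC_left cinner_scaleC_right mult.assoc)
  also have "c * cnj c = complex_of_real ((cmod c)\<^sup>2)" by (rule complex_norm_square[symmetric])
  finally have "complex_of_real ((norm (c *\<^sub>C x))\<^sup>2) = complex_of_real (((cmod c) * norm x)\<^sup>2)"
    unfolding cinner_self_norm of_real_mult[symmetric] by (simp add: power_mult_distrib)
  hence "(norm (c *\<^sub>C x))\<^sup>2 = ((cmod c) * norm x)\<^sup>2" using of_real_eq_iff by blast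
  thus ?thesis by (simp add: power2_eq_iff_nonneg)
qed

lemma cauchy_schwarz: "cmod (cinner x y) \<le> norm x * norm (y::'a::chilbert)"
proof (cases "y = 0")
  case True thus ?thesis by simp
next
  case False
  define a where "a = cinner x y"
  define N where "N = (norm y)\<^sup>2"
  have N: "N > 0" using False by (simp add: N_def)
  define z where "z = x - (a / N) *\<^sub>C y"
  have cyx: "cinner y x = cnj a" by (simp add: a_def cinner_commute[of x y])
  have "cinner z z = cinner x x - cnj (a/N) * a - (a/N) * cnj a + (a/N) * cnj (a/N) * N"
    unfolding z_def cinner_diff_left cinner_diff_right cinner_scaleC_left cinner_scaleC_right
    using cyx cinner_self_norm[of y, folded N_def] by (simp add: a_def[symmetric] algebra_simps)
  also have "\<dots> = cinner x x - (a * cnj a) / N"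
  proof -
    have c1: "cnj (a/N) = cnj a / N" by simp
    have "complex_of_real N \<noteq> 0" using N by simp
    thus ?thesis unfolding c1 by (simp add: field_simps)
  qed
  also have "\<dots> = complex_of_real ((norm x)\<^sup>2 - (cmod a)\<^sup>2 / N)"
    by (simp only: cinner_self_norm complex_norm_square[symmetric] of_real_diff of_real_divide)
  finally have "(norm z)\<^sup>2 = (norm x)\<^sup>2 - (cmod a)\<^sup>2 / N"
    by (metis cinner_self_norm of_real_eq_iff)
  hence "(cmod a)\<^sup>2 / N \<le> (norm x)\<^sup>2" by (metis diff_ge_0_iff_ge zero_le_power2)
  hence "(cmod a)\<^sup>2 \<le> (norm x * norm y)\<^sup>2" using N by (simp add: N_def field_simps power_mult_distrib)
  thus ?thesis unfolding a_def by (simp add: power2_le_iff_abs_le)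
qed


lemma bclin_zero: "bounded_clinear (\<lambda>_::'a::chilbert. 0::'a)"
  unfolding bounded_clinear_def by (simp add: bounded_linear_zero)

lemma bclin_id: "bounded_clinear (id::'a::chilbert \<Rightarrow> 'a)"
  unfolding bounded_clinear_def by (simp add: bounded_linear_ident[unfolded id_def[symmetric]])

lemma bclin_comp: "bounded_clinear A \<Longrightarrow> bounded_clinear B \<Longrightarrow> bounded_clinear (A \<circ> B)"
  unfolding bounded_clinear_def by (auto simp: o_def intro: bounded_linear_compose)

lemma bclin_diff: "bounded_clinear A \<Longrightarrow> bounded_clinear B \<Longrightarrow> bounded_clinear (\<lambda>v. A v - B v)"
  unfolding bounded_clinear_def by (auto intro: bounded_linear_sub simp: cvs.scale_right_diff_distrib)

lemma bclin_rank_one: "bounded_clinear (rank_one x (y::'a::chilbert))"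
  unfolding bounded_clinear_def rank_one_def
proof safe
  show "bounded_linear (\<lambda>v. cinner v y *\<^sub>C x)"
  proof (rule bounded_linear_intro[where K="norm y * norm x"])
    fix u v show "cinner (u + v) y *\<^sub>C x = cinner u y *\<^sub>C x + cinner v y *\<^sub>C x"
      by (simp add: cinner_add_left scaleC_add_left)
  next
    fix r v show "cinner (r *\<^sub>R v) y *\<^sub>C x = r *\<^sub>R (cinner v y *\<^sub>C x)"
      by (simp add: scaleC_of_real[symmetric] cinner_scaleC_left scaleC_scaleC)
  next
    fix v show "norm (cinner v y *\<^sub>C x) \<le> norm v * (norm y * norm x)"
      using cauchy_schwarz[of v y] by (simp add: norm_scaleC mult_right_mono mult.assoc[symmetric])
  qed
next
  fix c v show "cinner (c *\<^sub>C v) y *\<^sub>C x = c *\<^sub>C cinner v y *\<^sub>C x"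
    by (simp add: cinner_scaleC_left scaleC_scaleC)
qed

lemma bclin_bl: "bounded_clinear A \<Longrightarrow> bounded_linear A"
  unfolding bounded_clinear_def by simp

lemma cspan_empty: "cspan {} = {0::'a::chilbert}"
  unfolding cspan_def by simp

lemma rank_lt_zero: "k \<ge> 1 \<Longrightarrow> rank_lt (\<lambda>_::'a::chilbert. 0::'a) k"
  unfolding rank_lt_def by (rule exI[of _ "{}"]) (auto simp: cspan_empty)

lemma rank_lt_one: "rank_lt (X::'a::chilbert \<Rightarrow> 'a) 1 \<Longrightarrow> X = (\<lambda>_. 0)"
  unfolding rank_lt_def by (auto simp: cspan_empty fun_eq_iff image_subset_iff)

lemma sval_le:
  assumes "bounded_clinear A" "bounded_clinear X" "rank_lt X k"
  shows "sval k A \<le> onorm (\<lambda>v. A v - X v)"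
  unfolding sval_def
proof (rule cInf_lower)
  show "onorm (\<lambda>v. A v - X v) \<in> {onorm (\<lambda>v. A v - X v) |X. bounded_clinear X \<and> rank_lt X k}"
    using assms by blast
  show "bdd_below {onorm (\<lambda>v. A v - X v) |X. bounded_clinear X \<and> rank_lt X k}"
    by (rule bdd_belowI[of _ 0]) (auto intro!: onorm_pos_le bclin_bl bclin_diff assms)
qed

lemma sval_ge:
  assumes "k \<ge> 1" "\<And>X. bounded_clinear X \<Longrightarrow> rank_lt X k \<Longrightarrow> c \<le> onorm (\<lambda>v. A v - X v)"
  shows "c \<le> sval k (A::'a::chilbert \<Rightarrow> 'a)"
  unfolding sval_def
proof (rule cInf_greatest)
  show "{onorm (\<lambda>v. A v - X v) |X. bounded_clinear X \<and> rank_lt X k} \<noteq> {}"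
    using bclin_zero rank_lt_zero[OF assms(1)] by blast
qed (use assms in blast)

lemma sval_nonneg:
  assumes "bounded_clinear A" "k \<ge> 1" shows "0 \<le> sval k (A::'a::chilbert \<Rightarrow> 'a)"
  by (rule sval_ge[OF assms(2)]) (auto intro!: onorm_pos_le bclin_bl bclin_diff assms)

lemma sval_le_onorm:
  assumes "bounded_clinear A" "k \<ge> 1" shows "sval k (A::'a::chilbert \<Rightarrow> 'a) \<le> onorm A"
  using sval_le[OF assms(1) bclin_zero rank_lt_zero[OF assms(2)]] by simp

lemma sval_one:
  assumes "bounded_clinear A" shows "sval 1 (A::'a::chilbert \<Rightarrow> 'a) = onorm A"
proof (rule antisym)
  show "sval 1 A \<le> onorm A" using sval_le_onorm[OF assms] by simp
  show "onorm A \<le> sval 1 A"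
  proof (rule sval_ge)
    fix X :: "'a \<Rightarrow> 'a" assume "rank_lt X 1"
    hence "X = (\<lambda>_. 0)" by (rule rank_lt_one)
    thus "onorm A \<le> onorm (\<lambda>v. A v - X v)" by simp
  qed simp
qed

lemma rank_lt_comp:
  assumes "bounded_clinear A" "rank_lt X k"
  shows "rank_lt (A \<circ> (X::'a::chilbert \<Rightarrow> 'a)) k"
proof -
  obtain V where V: "finite V" "card V < k" "range X \<subseteq> cspan V"
    using assms(2) unfolding rank_lt_def by blast
  interpret h: module_hom scaleC scaleC A using bclin_hom[OF assms(1)] .
  have "range (A \<circ> X) \<subseteq> A ` cspan V" using V(3) by (auto simp: image_comp[symmetric])
  also have "\<dots> = cspan (A ` V)" using V(1) by (simp add: cspan_eq h.span_image)
  finally show ?thesis unfolding rank_lt_def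
    using V(1,2) card_image_le[OF V(1), of A] by (intro exI[of _ "A ` V"]) auto
qed

lemma sval_comp:
  assumes A: "bounded_clinear A" and B: "bounded_clinear B" and k: "k \<ge> 1"
  shows "sval k (A \<circ> B) \<le> onorm A * sval k (B::'a::chilbert \<Rightarrow> 'a)"
proof -
  have key: "sval k (A \<circ> B) \<le> onorm A * onorm (\<lambda>v. B v - X v)"
    if X: "bounded_clinear X" "rank_lt X k" for X
  proof -
    interpret h: module_hom scaleC scaleC A using bclin_hom[OF A] .
    have "sval k (A \<circ> B) \<le> onorm (\<lambda>v. (A \<circ> B) v - (A \<circ> X) v)"
      by (rule sval_le) (auto intro: bclin_comp[OF A X(1), unfolded o_def] bclin_comp[OF A B] rank_lt_comp[unfolded o_def] A X)
    also have "(\<lambda>v. (A \<circ> B) v - (A \<circ> X) v) = A \<circ> (\<lambda>v. B v - X v)"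
      by (auto simp: h.diff)
    also have "onorm \<dots> \<le> onorm A * onorm (\<lambda>v. B v - X v)"
      by (intro onorm_compose bclin_bl bclin_diff A B X)
    finally show ?thesis .
  qed
  show ?thesis
  proof (cases "onorm A = 0")
    case True
    thus ?thesis using key[OF bclin_zero rank_lt_zero[OF k]] by simp
  next
    case False
    hence pos: "onorm A > 0" using onorm_pos_le[OF bclin_bl[OF A]] by simp
    have "sval k (A \<circ> B) / onorm A \<le> sval k B"
      by (rule sval_ge[OF k]) (use key pos in \<open>auto simp: divide_le_eq mult.commute\<close>)
    thus ?thesis using pos by (simp add: divide_le_eq mult.commute)
  qed
qed


lemma onorm_rank_one:
  assumes "norm x = 1" "norm y = 1"
  shows "onorm (rank_one x (y::'a::chilbert)) = 1"
proof (rule antisym)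
  show "onorm (rank_one x y) \<le> 1"
  proof (rule onorm_bound)
    fix v show "norm (rank_one x y v) \<le> 1 * norm v"
      using cauchy_schwarz[of v y] assms by (simp add: rank_one_def norm_scaleC)
  qed simp
  have "norm (rank_one x y y) \<le> onorm (rank_one x y) * norm y"
    by (rule onorm[OF bclin_bl[OF bclin_rank_one]])
  moreover have "rank_one x y y = x"
    using assms by (simp add: rank_one_def cinner_self_norm scaleC_one)
  ultimately show "1 \<le> onorm (rank_one x y)" using assms by simp
qed

lemma sval_rank_one:
  assumes "norm x = 1" "norm y = 1"
  shows "sval (Suc j) (rank_one x (y::'a::chilbert)) = first_unit j"
proof (cases j)
  case 0 thus ?thesis
    using sval_one[OF bclin_rank_one, of x y] onorm_rank_one[OF assms] by (simp add: first_unit_def)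
next
  case (Suc m)
  have rk: "rank_lt (rank_one x y) (Suc j)"
    unfolding rank_lt_def
  proof (intro exI[of _ "{x}"] conjI)
    show "range (rank_one x y) \<subseteq> cspan {x}"
      unfolding cspan_def rank_one_def by auto
  qed (use Suc in auto)
  have "sval (Suc j) (rank_one x y) \<le> 0"
    using sval_le[OF bclin_rank_one[of x y] bclin_rank_one rk] by (simp add: onorm_zero)
  moreover have "0 \<le> sval (Suc j) (rank_one x y)" by (rule sval_nonneg[OF bclin_rank_one]) simp
  ultimately show ?thesis using Suc by (simp add: first_unit_def)
qed

lemma sval_id_ge:
  assumes dim: "dim_ge TYPE('a::chilbert) n" and k: "1 \<le> k" "k \<le> n"
  shows "1 \<le> sval k (id::'a \<Rightarrow> 'a)"
proof (rule sval_ge[OF k(1)])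
  obtain V :: "'a set" where V: "cindependent V" "card V = n"
    using dim unfolding dim_ge_def by blast
  have Vf: "finite V" and Vi: "cvs.independent V" using V(1) cindependent_eq by auto
  fix X :: "'a \<Rightarrow> 'a" assume X: "bounded_clinear X" "rank_lt X k"
  obtain W where W: "finite W" "card W < k" "range X \<subseteq> cspan W"
    using X(2) unfolding rank_lt_def by blast
  interpret h: module_hom scaleC scaleC X using bclin_hom[OF X(1)] .
  have "\<exists>v\<in>cvs.span V. v \<noteq> 0 \<and> X v = 0"
  proof (rule ccontr)
    assume "\<not> ?thesis"
    hence inj: "inj_on X (cvs.span V)"
      using h.inj_on_iff_eq_0[OF cvs.subspace_span] by blast
    hence "cvs.independent (X ` V)" by (rule h.independent_injective_image[OF Vi])
    moreover have "X ` V \<subseteq> cvs.span W" using W(3) cspan_eq[OF W(1)] by auto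
    ultimately have "card (X ` V) \<le> card W" using cvs.independent_span_bound[OF W(1)] by blast
    moreover have "card (X ` V) = card V"
      using inj by (intro card_image) (meson inj_on_subset cvs.span_superset)
    ultimately show False using W(2) k V(2) by simp
  qed
  then obtain v where v: "v \<noteq> 0" "X v = 0" by blast
  have "norm (id v - X v) \<le> onorm (\<lambda>u. id u - X u) * norm v"
    by (rule onorm) (intro bclin_bl bclin_diff bclin_id X(1))
  thus "1 \<le> onorm (\<lambda>u. id u - X u)" using v by simp
qed


lemma unit_exists:
  assumes "dim_ge TYPE('a::chilbert) n" "n \<ge> 1"
  shows "\<exists>x::'a. norm x = 1"
proof -
  obtain V :: "'a set" where V: "cindependent V" "card V = n"
    using assms(1) unfolding dim_ge_def by blast
  then obtain v where v: "v \<in> V" using assms(2) by fastforce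
  have "v \<noteq> 0" using v V(1) cindependent_eq cvs.dependent_zero by blast
  thus ?thesis by (intro exI[of _ "(1 / norm v) *\<^sub>R v"]) simp
qed

lemma symn_cong: "symmetric_norm n f \<Longrightarrow> (\<And>i. i < n \<Longrightarrow> x i = y i) \<Longrightarrow> f x = f y"
  unfolding symmetric_norm_def by blast

lemma symn_homog: "symmetric_norm n f \<Longrightarrow> f (\<lambda>i. a * x i) = \<bar>a\<bar> * f x"
  unfolding symmetric_norm_def by blast

lemma symn_tri: "symmetric_norm n f \<Longrightarrow> f (\<lambda>i. x i + y i) \<le> f x + f y"
  unfolding symmetric_norm_def by blast

lemma symn_sign: "symmetric_norm n f \<Longrightarrow> (\<And>i. i < n \<Longrightarrow> e i = 1 \<or> e i = -1) \<Longrightarrow> f (\<lambda>i. e i * x i) = f x"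
  unfolding symmetric_norm_def by blast

lemma symn_zero_iff: "symmetric_norm n f \<Longrightarrow> f x = 0 \<longleftrightarrow> (\<forall>i<n. x i = 0)"
  unfolding symmetric_norm_def by blast

lemma symn_nonneg:
  assumes f: "symmetric_norm n f" shows "0 \<le> f x"
proof -
  have "f (\<lambda>i. x i + (-1) * x i) \<le> f x + f (\<lambda>i. (-1) * x i)" by (rule symn_tri[OF f])
  moreover have "f (\<lambda>i. x i + (-1) * x i) = 0" using symn_zero_iff[OF f] by simp
  moreover have "f (\<lambda>i. (-1) * x i) = f x" using symn_homog[OF f, of "-1" x] by simp
  ultimately show ?thesis by simp
qed

lemma symn_mono1:
  assumes f: "symmetric_norm n f" and k: "\<And>i. i \<noteq> k \<Longrightarrow> x i = y i" and le: "\<bar>x k\<bar> \<le> \<bar>y k\<bar>"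
  shows "f x \<le> f y"
proof (cases "y k = 0")
  case True
  hence "x = y" using k le by (auto simp: fun_eq_iff) (metis abs_le_zero_iff)
  thus ?thesis by simp
next
  case False
  define t where "t = (1 + x k / y k) / 2"
  have t01: "0 \<le> t" "t \<le> 1"
  proof -
    have "\<bar>x k / y k\<bar> \<le> 1" using le False by (simp add: abs_divide divide_le_eq_1)
    thus "0 \<le> t" "t \<le> 1" unfolding t_def abs_le_iff by auto
  qed
  define e where "e = (\<lambda>i. if i = k then -1 else (1::real))"
  define y' where "y' = (\<lambda>i. e i * y i)"
  have fy': "f y' = f y" unfolding y'_def by (rule symn_sign[OF f]) (simp add: e_def)
  have "x = (\<lambda>i. (\<lambda>i. t * y i) i + (\<lambda>i. (1 - t) * y' i) i)"
  proof
    fix i show "x i = t * y i + (1 - t) * y' i"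
    proof (cases "i = k")
      case True thus ?thesis using False
        by (simp add: y'_def e_def t_def field_simps)
    next
      case no: False thus ?thesis using k[OF no] by (simp add: y'_def e_def algebra_simps)
    qed
  qed
  hence "f x \<le> f (\<lambda>i. t * y i) + f (\<lambda>i. (1 - t) * y' i)"
    using symn_tri[OF f] by metis
  also have "\<dots> = t * f y + (1 - t) * f y"
    using t01 by (simp add: symn_homog[OF f] fy')
  finally show ?thesis by (simp add: algebra_simps)
qed

lemma symn_mono:
  assumes f: "symmetric_norm n f" and le: "\<And>i. i < n \<Longrightarrow> \<bar>x i\<bar> \<le> \<bar>y i\<bar>"
  shows "f x \<le> f y"
proof -
  define z where "z m = (\<lambda>i. if i < m then x i else y i)" for m
  have "m \<le> n \<Longrightarrow> f (z m) \<le> f y" for m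
  proof (induction m)
    case 0 thus ?case by (simp add: z_def)
  next
    case (Suc m)
    have "f (z (Suc m)) \<le> f (z m)"
      by (rule symn_mono1[OF f, of m]) (use Suc.prems le in \<open>auto simp: z_def\<close>)
    thus ?case using Suc by simp
  qed
  moreover have "f x = f (z n)" by (rule symn_cong[OF f]) (simp add: z_def)
  ultimately show ?thesis by simp
qed

theorem proposition2p4:
  fixes n :: nat
    and f :: "(nat \<Rightarrow> real) \<Rightarrow> real"
    and S :: "(nat \<Rightarrow> real) set"
  assumes n_pos: "n \<ge> 1"
    and f_sym: "symmetric_norm n f"
    and dimH: "dim_ge TYPE('h::chilbert) n"
    and S_compact: "compact S"
    and S_support: "\<forall>c\<in>S. \<forall>i\<ge>n. c i = 0"
    and S_decr: "\<forall>c\<in>S. \<forall>i j. i \<le> j \<and> j < n \<longrightarrow> c j \<le> c i"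
    and S_nonneg: "\<forall>c\<in>S. c (n - 1) \<ge> 0"
    and S_max: "\<forall>A::'h \<Rightarrow> 'h. bounded_clinear A \<longrightarrow>
        (\<exists>c\<in>S. ui_norm n f A = (\<Sum>j<n. c j * sval (Suc j) A)) \<and>
        (\<forall>c\<in>S. (\<Sum>j<n. c j * sval (Suc j) A) \<le> ui_norm n f A)"
  shows "((\<forall>A B::'h \<Rightarrow> 'h. bounded_clinear A \<longrightarrow> bounded_clinear B \<longrightarrow>
              ui_norm n f (A \<circ> B) \<le> ui_norm n f A * ui_norm n f B)
          \<longleftrightarrow> (\<forall>A::'h \<Rightarrow> 'h. bounded_clinear A \<longrightarrow> ui_norm n f A \<ge> sval 1 A))
       \<and> ((\<forall>A B::'h \<Rightarrow> 'h. bounded_clinear A \<longrightarrow> bounded_clinear B \<longrightarrow>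
              ui_norm n f (A \<circ> B) \<le> ui_norm n f A * ui_norm n f B)
          \<longleftrightarrow> (\<exists>x y::'h. norm x = 1 \<and> norm y = 1 \<and> ui_norm n f (rank_one x y) \<ge> 1))
       \<and> ((\<forall>A B::'h \<Rightarrow> 'h. bounded_clinear A \<longrightarrow> bounded_clinear B \<longrightarrow>
              ui_norm n f (A \<circ> B) \<le> ui_norm n f A * ui_norm n f B)
          \<longleftrightarrow> f first_unit \<ge> 1)
       \<and> ((\<forall>A B::'h \<Rightarrow> 'h. bounded_clinear A \<longrightarrow> bounded_clinear B \<longrightarrow>
              ui_norm n f (A \<circ> B) \<le> ui_norm n f A * ui_norm n f B)
          \<longleftrightarrow> (\<exists>c\<in>S. c 0 \<ge> 1))
       \<and> (((\<forall>A B::'h \<Rightarrow> 'h. bounded_clinear A \<longrightarrow> bounded_clinear B \<longrightarrow>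
              ui_norm n f (A \<circ> B) \<le> ui_norm n f A * ui_norm n f B)
            \<and> ui_norm n f (id::'h \<Rightarrow> 'h) = 1)
          \<longleftrightarrow> (\<forall>A::'h \<Rightarrow> 'h. bounded_clinear A \<longrightarrow> ui_norm n f A = onorm A))"
proof -
  let ?ui = "ui_norm n f :: ('h \<Rightarrow> 'h) \<Rightarrow> real"
  let ?e = "f first_unit"
  have n0: "0 < n" using n_pos by simp
  have ui_nonneg: "0 \<le> ?ui A" for A unfolding ui_norm_def by (rule symn_nonneg[OF f_sym])
  have ui_rank: "?ui (rank_one x y) = ?e" if "norm x = 1" "norm y = 1" for x y :: 'h
    unfolding ui_norm_def using sval_rank_one[OF that] by (simp add: fun_eq_iff)
  have e_pos: "0 < ?e"
    using symn_nonneg[OF f_sym, of first_unit] symn_zero_iff[OF f_sym, of first_unit] n0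
    by (fastforce simp: first_unit_def)
  obtain x0 :: 'h where x0: "norm x0 = 1" using unit_exists[OF dimH n_pos] by blast
  define R where "R = rank_one x0 x0"
  have R_ui: "?ui R = ?e" unfolding R_def by (rule ui_rank[OF x0 x0])
  have R_bc: "bounded_clinear R" unfolding R_def by (rule bclin_rank_one)
  have RR: "R \<circ> R = R"
  proof
    fix v
    have "cinner x0 x0 = 1" using x0 by (simp add: cinner_self_norm)
    thus "(R \<circ> R) v = R v"
      by (simp add: R_def rank_one_def cinner_scaleC_left scaleC_scaleC)
  qed
  have R_s1: "sval 1 R = 1" using sval_one[OF R_bc] onorm_rank_one[OF x0 x0] by (simp add: R_def)
  have Q31: "sval 1 A \<le> ?ui A" if e1: "1 \<le> ?e" and A: "bounded_clinear A" for A :: "'h \<Rightarrow> 'h"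
  proof -
    have s0: "0 \<le> sval 1 A" by (rule sval_nonneg[OF A]) simp
    have "sval 1 A \<le> \<bar>sval 1 A\<bar> * ?e" using e1 s0 by (simp add: mult_le_cancel_left1)
    also have "\<dots> = f (\<lambda>i. sval 1 A * first_unit i)" by (simp add: symn_homog[OF f_sym])
    also have "\<dots> \<le> ?ui A" unfolding ui_norm_def
      by (rule symn_mono[OF f_sym]) (auto simp: first_unit_def intro: sval_nonneg[OF A])
    finally show ?thesis .
  qed
  have P_iff_Q3: "(\<forall>A B::'h \<Rightarrow> 'h. bounded_clinear A \<longrightarrow> bounded_clinear B \<longrightarrow>
              ?ui (A \<circ> B) \<le> ?ui A * ?ui B) \<longleftrightarrow> 1 \<le> ?e"
  proof
    assume P: "\<forall>A B::'h \<Rightarrow> 'h. bounded_clinear A \<longrightarrow> bounded_clinear B \<longrightarrow>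
              ?ui (A \<circ> B) \<le> ?ui A * ?ui B"
    have "?e \<le> ?e * ?e" using P[rule_format, OF R_bc R_bc] RR R_ui by simp
    thus "1 \<le> ?e" using e_pos by simp
  next
    assume e1: "1 \<le> ?e"
    show "\<forall>A B::'h \<Rightarrow> 'h. bounded_clinear A \<longrightarrow> bounded_clinear B \<longrightarrow>
              ?ui (A \<circ> B) \<le> ?ui A * ?ui B"
    proof (intro allI impI)
      fix A B :: "'h \<Rightarrow> 'h" assume A: "bounded_clinear A" and B: "bounded_clinear B"
      have oA: "0 \<le> onorm A" by (rule onorm_pos_le[OF bclin_bl[OF A]])
      have "?ui (A \<circ> B) \<le> f (\<lambda>j. onorm A * sval (Suc j) B)" unfolding ui_norm_def
      proof (rule symn_mono[OF f_sym])
        fix i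
        have "0 \<le> sval (Suc i) (A \<circ> B)" by (rule sval_nonneg[OF bclin_comp[OF A B]]) simp
        moreover have "0 \<le> sval (Suc i) B" by (rule sval_nonneg[OF B]) simp
        moreover have "sval (Suc i) (A \<circ> B) \<le> onorm A * sval (Suc i) B"
          by (rule sval_comp[OF A B]) simp
        ultimately show "\<bar>sval (Suc i) (A \<circ> B)\<bar> \<le> \<bar>onorm A * sval (Suc i) B\<bar>"
          using oA by simp
      qed
      also have "\<dots> = onorm A * ?ui B" using oA by (simp add: symn_homog[OF f_sym] ui_norm_def)
      also have "\<dots> \<le> ?ui A * ?ui B"
        using Q31[OF e1 A] sval_one[OF A] ui_nonneg by (simp add: mult_right_mono)
      finally show "?ui (A \<circ> B) \<le> ?ui A * ?ui B" .
    qed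
  qed
  have Q1_iff_Q3: "(\<forall>A::'h \<Rightarrow> 'h. bounded_clinear A \<longrightarrow> ?ui A \<ge> sval 1 A) \<longleftrightarrow> 1 \<le> ?e"
    using Q31 R_bc R_s1 R_ui by metis
  have Q2_iff_Q3: "(\<exists>x y::'h. norm x = 1 \<and> norm y = 1 \<and> ?ui (rank_one x y) \<ge> 1) \<longleftrightarrow> 1 \<le> ?e"
    using ui_rank x0 by metis
  have sumR: "(\<Sum>j<n. c j * sval (Suc j) R) = c 0" for c :: "nat \<Rightarrow> real"
  proof -
    have "(\<Sum>j<n. c j * sval (Suc j) R) = (\<Sum>j<n. if j = 0 then c j else 0)"
      by (rule sum.cong) (auto simp: R_def sval_rank_one[OF x0 x0] first_unit_def)
    also have "\<dots> = c 0" using n0 by (simp add: sum.delta)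
    finally show ?thesis .
  qed
  have Q4_iff_Q3: "(\<exists>c\<in>S. c 0 \<ge> 1) \<longleftrightarrow> 1 \<le> ?e"
    using S_max[rule_format, OF R_bc] unfolding sumR R_ui by force
  have last: "((\<forall>A B::'h \<Rightarrow> 'h. bounded_clinear A \<longrightarrow> bounded_clinear B \<longrightarrow>
              ?ui (A \<circ> B) \<le> ?ui A * ?ui B) \<and> ?ui (id::'h \<Rightarrow> 'h) = 1)
          \<longleftrightarrow> (\<forall>A::'h \<Rightarrow> 'h. bounded_clinear A \<longrightarrow> ?ui A = onorm A)"
  proof
    assume L: "(\<forall>A B::'h \<Rightarrow> 'h. bounded_clinear A \<longrightarrow> bounded_clinear B \<longrightarrow>
              ?ui (A \<circ> B) \<le> ?ui A * ?ui B) \<and> ?ui (id::'h \<Rightarrow> 'h) = 1"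
    hence e1: "1 \<le> ?e" using P_iff_Q3 by blast
    have fone: "f (\<lambda>i. 1) \<le> 1"
    proof -
      have "f (\<lambda>i. 1) \<le> ?ui (id::'h \<Rightarrow> 'h)" unfolding ui_norm_def
      proof (rule symn_mono[OF f_sym])
        fix i assume "i < n"
        hence "1 \<le> sval (Suc i) (id::'h \<Rightarrow> 'h)" by (intro sval_id_ge[OF dimH]) auto
        thus "\<bar>1::real\<bar> \<le> \<bar>sval (Suc i) (id::'h \<Rightarrow> 'h)\<bar>" by simp
      qed
      thus ?thesis using L by simp
    qed
    show "\<forall>A::'h \<Rightarrow> 'h. bounded_clinear A \<longrightarrow> ?ui A = onorm A"
    proof (intro allI impI)
      fix A :: "'h \<Rightarrow> 'h" assume A: "bounded_clinear A"
      have oA: "0 \<le> onorm A" by (rule onorm_pos_le[OF bclin_bl[OF A]])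
      have "?ui A \<le> f (\<lambda>i. onorm A * 1)" unfolding ui_norm_def
      proof (rule symn_mono[OF f_sym])
        fix i
        have "0 \<le> sval (Suc i) A" by (rule sval_nonneg[OF A]) simp
        moreover have "sval (Suc i) A \<le> onorm A" by (rule sval_le_onorm[OF A]) simp
        ultimately show "\<bar>sval (Suc i) A\<bar> \<le> \<bar>onorm A * 1\<bar>" using oA by simp
      qed
      also have "\<dots> = onorm A * f (\<lambda>i. 1)" using symn_homog[OF f_sym, of "onorm A" "\<lambda>i. 1"] oA by simp
      also have "\<dots> \<le> onorm A" using fone oA by (simp add: mult_left_le)
      finally show "?ui A = onorm A" using Q31[OF e1 A] sval_one[OF A] by simp
    qed
  next
    assume L: "\<forall>A::'h \<Rightarrow> 'h. bounded_clinear A \<longrightarrow> ?ui A = onorm A"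
    have "?ui (id::'h \<Rightarrow> 'h) = 1"
    proof -
      have "onorm (id::'h \<Rightarrow> 'h) \<le> 1" using onorm_id_le by (simp add: id_def)
      moreover have "1 \<le> onorm (id::'h \<Rightarrow> 'h)"
        using sval_id_ge[OF dimH, of 1] n_pos sval_one[OF bclin_id, where 'a='h] by simp
      ultimately show ?thesis using L[rule_format, OF bclin_id[where 'a='h]] by simp
    qed
    moreover have "\<forall>A B::'h \<Rightarrow> 'h. bounded_clinear A \<longrightarrow> bounded_clinear B \<longrightarrow>
              ?ui (A \<circ> B) \<le> ?ui A * ?ui B"
      using L bclin_comp onorm_compose bclin_bl by metis
    ultimately show "(\<forall>A B::'h \<Rightarrow> 'h. bounded_clinear A \<longrightarrow> bounded_clinear B \<longrightarrow>
              ?ui (A \<circ> B) \<le> ?ui A * ?ui B) \<and> ?ui (id::'h \<Rightarrow> 'h) = 1" by blast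
  qed
  show ?thesis using P_iff_Q3 Q1_iff_Q3 Q2_iff_Q3 Q4_iff_Q3 last by blast
qed

end
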